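(* Let $x,\tilde x\in(-1,0)$ and $y\in(x,-x)$. Set $\Delta t=p_{1,-1}(\tilde x)-p_{1,-1}(x)$ and $\Delta\theta=p_{0,-1}(\tilde x)-p_{0,-1}(x)$. Then $$p_{\tilde x,-\tilde x}\Big(p_{\tilde x,1}^{-1}\big(p_{x,1}(y)+\Delta\theta\big)\Big)-p_{x,-x}(y)=\Delta t.$$
   Context: For real $p\neq q$ and $w$ strictly between $p$ and $q$ (oriented interval $(p,q)$, $p>q$ allowed), $p_{p,q}(w)=\ln\frac{w-p}{q-w}$, a bijection onto $\mathbb{R}$ with inverse $p_{p,q}^{-1}$. *)

theory Defs
  imports Complex_Main
begin

definition between :: "real \<Rightarrow> real \<Rightarrow> real set" where
  "between p q = {w. min p q < w \<and> w < max p q}"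

text \<open>p_{p,q}(w) = ln((w - p)/(q - w)), meant for w strictly between p and q.\<close>
definition pmap :: "real \<Rightarrow> real \<Rightarrow> real \<Rightarrow> real" where
  "pmap p q w = ln ((w - p) / (q - w))"

definition pinv :: "real \<Rightarrow> real \<Rightarrow> real \<Rightarrow> real" where
  "pinv p q = the_inv_into (between p q) (pmap p q)"

end

theory Submission
  imports Defs
begin

lemma pmap_inj: assumes "p \<noteq> q" shows "inj_on (pmap p q) (between p q)"
proof
  fix u v assume u: "u \<in> between p q" and v: "v \<in> between p q" and e: "pmap p q u = pmap p q v"
  have pu: "(u - p) / (q - u) > 0" and pv: "(v - p) / (q - v) > 0"
    using u v assms by (auto simp: between_def min_def max_def divide_pos_pos divide_neg_neg split: if_splits)
  have "(u - p) / (q - u) = (v - p) / (q - v)" using e pu pv by (simp add: pmap_def)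
  moreover have "q - u \<noteq> 0" "q - v \<noteq> 0" using u v by (auto simp: between_def min_def max_def split: if_splits)
  ultimately have "(u - p) * (q - v) = (v - p) * (q - u)" by (simp add: field_simps)
  hence "(u - v) * (q - p) = 0" by (simp add: algebra_simps)
  thus "u = v" using assms by simp
qed

lemma pinv_eq: assumes "p \<noteq> q"
  shows "pinv p q s = (p + q * exp s) / (1 + exp s)"
proof -
  define w where "w = (p + q * exp s) / (1 + exp s)"
  have E: "exp s > 0" by simp
  have E1: "1 + exp s \<noteq> 0" using E by linarith
  have wp: "w - p = (q - p) * exp s / (1 + exp s)" unfolding w_def using E1 by (simp add: field_simps)
  have qw: "q - w = (q - p) / (1 + exp s)" unfolding w_def using E1 by (simp add: field_simps)
  have inb: "w \<in> between p q"
  proof (cases "p < q")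
    case True
    have "(q - p) * exp s / (1 + exp s) > 0" "(q - p) / (1 + exp s) > 0" using True E
      by (simp_all add: add_pos_pos)
    then show ?thesis using wp qw True by (auto simp: between_def)
  next
    case False
    then have "q < p" using assms by simp
    have "(q - p) * exp s / (1 + exp s) < 0" "(q - p) / (1 + exp s) < 0" using \<open>q < p\<close> E
      by (simp_all add: add_pos_pos divide_neg_pos mult_neg_pos)
    then show ?thesis using wp qw \<open>q < p\<close> by (auto simp: between_def)
  qed
  have "(w - p) / (q - w) = exp s" proof -
    have "q - p \<noteq> 0" using assms by simp
    thus ?thesis by (simp add: wp qw E1)
  qed
  hence "pmap p q w = s" by (simp add: pmap_def)
  hence "pinv p q s = w" unfolding pinv_def using the_inv_into_f_f[OF pmap_inj[OF assms] inb] by simp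
  thus ?thesis by (simp add: w_def)
qed

theorem proposition2p4:
  fixes x xt y :: real
  assumes "x \<in> {-1<..<0}" and "xt \<in> {-1<..<0}" and "y \<in> {x<..<-x}"
  shows "pmap xt (-xt) (pinv xt 1 (pmap x 1 y + (pmap 0 (-1) xt - pmap 0 (-1) x)))
           - pmap x (-x) y = pmap 1 (-1) xt - pmap 1 (-1) x"
proof -
  from assms have x1: "-1 < x" "x < 0" and t1: "-1 < xt" "xt < 0" and y1: "x < y" "y < -x" by auto
  define a where "a = (y - x) / (1 - y)"
  define c where "c = xt / (-1 - xt)"
  define d where "d = x / (-1 - x)"
  have a0: "a > 0" unfolding a_def using x1 y1 by simp
  have c0: "c > 0" unfolding c_def using t1 by (simp add: divide_neg_neg)
  have d0: "d > 0" unfolding d_def using x1 by (simp add: divide_neg_neg)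
  have s: "pmap x 1 y + (pmap 0 (-1) xt - pmap 0 (-1) x) = ln (a * c / d)"
    unfolding pmap_def a_def[symmetric] using a0 c0 d0
    by (simp add: c_def[symmetric] d_def[symmetric] ln_mult ln_div)
  define E where "E = a * c / d"
  have E0: "E > 0" unfolding E_def using a0 c0 d0 by simp
  have pi: "pinv xt 1 (ln E) = (xt + E) / (1 + E)" using pinv_eq[of xt 1 "ln E"] t1 E0 by simp
  have r1: "(y - x) / (- x - y) > 0" using y1 by simp
  have r2: "(xt - 1) / (- 1 - xt) > 0" using t1 by (simp add: divide_neg_neg)
  have r3: "(x - 1) / (- 1 - x) > 0" using x1 by (simp add: divide_neg_neg)
  have nz: "x \<noteq> 0" "1 + xt \<noteq> 0" "1 - y \<noteq> 0" "1 + x \<noteq> 0" "xt \<noteq> 0" "x + y \<noteq> 0"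
    using x1 t1 y1 by auto
  have n1: "1 + E \<noteq> 0" using E0 by linarith
  have wa: "(xt + E) / (1 + E) - xt = E * (1 - xt) / (1 + E)" using n1 by (simp add: field_simps)
  have wb: "- xt - (xt + E) / (1 + E) = (- 2 * xt - E * (1 + xt)) / (1 + E)" using n1 by (simp add: field_simps)
  have Ee: "E = (y - x) * xt * (1 + x) / ((1 - y) * x * (1 + xt))"
    unfolding E_def a_def c_def d_def using x1 t1 y1 by (simp add: field_simps) (subst minus_divide_divide[symmetric], simp)
  have den: "- 2 * xt - E * (1 + xt) = - 2 * xt - (y - x) * xt * (1 + x) / ((1 - y) * x)"
  proof -
    have "E * (1 + xt) = (y - x) * xt * (1 + x) / ((1 - y) * x)"
      unfolding Ee using nz by (simp add: divide_simps)
    thus ?thesis by simp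
  qed
  have den2: "- 2 * xt - E * (1 + xt) = xt * (x + y) * (x - 1) / ((1 - y) * x)"
    unfolding den using nz by (simp add: field_simps)
  have key: "((xt + E) / (1 + E) - xt) / (- xt - (xt + E) / (1 + E))
      = (y - x) / (- x - y) * ((xt - 1) / (- 1 - xt)) / ((x - 1) / (- 1 - x))"
  proof -
    have "x - 1 \<noteq> 0" "1 - xt \<noteq> 0" "1 - y \<noteq> 0" using x1 t1 y1 by auto
    have l: "((xt + E) / (1 + E) - xt) / (- xt - (xt + E) / (1 + E)) = E * (1 - xt) / (- 2 * xt - E * (1 + xt))"
      unfolding wa wb using n1 by simp
    also have "\<dots> = (y - x) * (1 + x) * (1 - xt) / ((1 + xt) * (x + y) * (x - 1))"
    proof -
      have A: "(1 - y) * x \<noteq> 0" using nz \<open>1 - y \<noteq> 0\<close> by simp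
      have M: "xt * (x + y) * (x - 1) \<noteq> 0" using nz \<open>x - 1 \<noteq> 0\<close> by simp
      have "E * (1 - xt) / (- 2 * xt - E * (1 + xt))
         = ((y - x) * xt * (1 + x) / (((1 - y) * x) * (1 + xt))) * (1 - xt) / (xt * (x + y) * (x - 1) / ((1 - y) * x))"
        by (simp only: den2) (simp only: Ee)
      also have "\<dots> = ((y - x) * xt * (1 + x)) * (1 - xt) / ((1 + xt) * (xt * (x + y) * (x - 1)))"
        using A M nz by (simp add: divide_simps)
      also have "\<dots> = (y - x) * (1 + x) * (1 - xt) / ((1 + xt) * (x + y) * (x - 1))"
        using nz by (simp add: ac_simps)
      finally show ?thesis .
    qed
    also have "\<dots> = (y - x) / (- x - y) * ((xt - 1) / (- 1 - xt)) / ((x - 1) / (- 1 - x))"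
      using nz \<open>x - 1 \<noteq> 0\<close> by (simp add: field_simps)
    finally show ?thesis .
  qed
  show ?thesis unfolding s E_def[symmetric] pi unfolding pmap_def key
  proof -
    define R1 where "R1 = (y - x) / (- x - y)"
    define R2 where "R2 = (xt - 1) / (- 1 - xt)"
    define R3 where "R3 = (x - 1) / (- 1 - x)"
    have "R1 > 0" "R2 > 0" "R3 > 0" using r1 r2 r3 by (simp_all add: R1_def R2_def R3_def)
    hence "ln (R1 * R2 / R3) - ln R1 = ln R2 - ln R3" by (simp add: ln_div ln_mult)
    thus "ln ((y - x) / (- x - y) * ((xt - 1) / (- 1 - xt)) / ((x - 1) / (- 1 - x))) - ln ((y - x) / (- x - y)) =
      ln ((xt - 1) / (- 1 - xt)) - ln ((x - 1) / (- 1 - x))" by (simp only: R1_def R2_def R3_def)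
  qed
qed

end
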